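(* Let $m\ge 5$ and $H=\Theta(l_1,\ldots,l_m)$ with $l_1=2$ and $l_2=\cdots=l_m=4$, and let $G=H^2$. Then $G$ is equitably $(m+2)$-choosable.
   Context: $\Theta(l_1,\ldots,l_m)$ denotes the graph consisting of two vertices $u,w$ joined by $m$ internally disjoint paths of lengths $l_1,\ldots,l_m$. For a graph $H$, $H^2$ has vertex set $V(H)$ with two vertices adjacent iff their distance in $H$ is 1 or 2. A $k$-assignment $L$ assigns to each vertex a set of exactly $k$ colors; an equitable $L$-coloring of $G$ is a proper coloring $f$ with $f(v)\in L(v)$ such that no color is used more than $\lceil |V(G)|/k\rceil$ times; $G$ is equitably $k$-choosable if it has an equitable $L$-coloring for every $k$-assignment $L$. *)

theory Defs
  imports Complex_Main
begin

text \<open>Vertices of a theta graph: the two branch vertices u, w and the internal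
  vertices TP i j (j-th internal vertex, 1 \<le> j < l_i, of the i-th path, 0-indexed i).\<close>
datatype tvert = TU | TW | TP nat nat

definition theta_pos :: "nat list \<Rightarrow> nat \<Rightarrow> nat \<Rightarrow> tvert" where
  "theta_pos ls i j = (if j = 0 then TU else if j = ls ! i then TW else TP i j)"

definition theta_V :: "nat list \<Rightarrow> tvert set" where
  "theta_V ls = {TU, TW} \<union> {TP i j | i j. i < length ls \<and> 1 \<le> j \<and> j < ls ! i}"

definition theta_E :: "nat list \<Rightarrow> tvert \<Rightarrow> tvert \<Rightarrow> bool" where
  "theta_E ls x y = (\<exists>i < length ls. \<exists>j < ls ! i.
      (x = theta_pos ls i j \<and> y = theta_pos ls i (Suc j)) \<or>
      (y = theta_pos ls i j \<and> x = theta_pos ls i (Suc j)))"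

definition graph_square :: "'v set \<Rightarrow> ('v \<Rightarrow> 'v \<Rightarrow> bool) \<Rightarrow> 'v \<Rightarrow> 'v \<Rightarrow> bool" where
  "graph_square V E x y = (x \<in> V \<and> y \<in> V \<and> x \<noteq> y \<and>
      (E x y \<or> (\<exists>z \<in> V. E x z \<and> E z y)))"

definition k_assignment :: "'v set \<Rightarrow> nat \<Rightarrow> ('v \<Rightarrow> nat set) \<Rightarrow> bool" where
  "k_assignment V k L = (\<forall>v \<in> V. finite (L v) \<and> card (L v) = k)"

definition equitable_L_coloring ::
  "'v set \<Rightarrow> ('v \<Rightarrow> 'v \<Rightarrow> bool) \<Rightarrow> nat \<Rightarrow> ('v \<Rightarrow> nat set) \<Rightarrow> ('v \<Rightarrow> nat) \<Rightarrow> bool" where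
  "equitable_L_coloring V E k L f =
     ((\<forall>v \<in> V. f v \<in> L v) \<and>
      (\<forall>x \<in> V. \<forall>y \<in> V. E x y \<longrightarrow> f x \<noteq> f y) \<and>
      (\<forall>c. card {v \<in> V. f v = c} \<le> nat \<lceil>real (card V) / real k\<rceil>))"

definition equitably_choosable :: "'v set \<Rightarrow> ('v \<Rightarrow> 'v \<Rightarrow> bool) \<Rightarrow> nat \<Rightarrow> bool" where
  "equitably_choosable V E k =
     (\<forall>L. k_assignment V k L \<longrightarrow> (\<exists>f. equitable_L_coloring V E k L f))"

end

theory Submission
  imports Defs
begin


definition Eex :: "nat \<Rightarrow> tvert \<Rightarrow> tvert \<Rightarrow> bool" where
"Eex m x y = ((\<exists>i<m. (x=TU \<and> y=TP i 1) \<or> (y=TU \<and> x=TP i 1)) \<or> (x=TW \<and> y=TP 0 1) \<or> (y=TW \<and> x=TP 0 1) \<or>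
   (\<exists>i. 1\<le>i \<and> i<m \<and> (x=TW \<and> y=TP i 3 \<or> y=TW \<and> x=TP i 3 \<or> x=TP i 1 \<and> y=TP i 2 \<or> y=TP i 1 \<and> x=TP i 2
      \<or> x=TP i 2 \<and> y=TP i 3 \<or> y=TP i 2 \<and> x=TP i 3)))"

lemma Eex_TU: "Eex m TU z \<longleftrightarrow> (\<exists>i<m. z = TP i 1)"
  by (auto simp: Eex_def)
lemma Eex_TW: "Eex m TW z \<longleftrightarrow> z = TP 0 1 \<or> (\<exists>i. 1\<le>i \<and> i<m \<and> z = TP i 3)"
  by (auto simp: Eex_def)
lemma Eex_TP: "Eex m (TP i j) z \<longleftrightarrow> (i<m \<and> j = 1 \<and> z = TU) \<or> (i = 0 \<and> j = 1 \<and> z = TW) \<or>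
   (1\<le>i \<and> i<m \<and> (j=3 \<and> z=TW \<or> j=1 \<and> z = TP i 2 \<or> j=2 \<and> z = TP i 1 \<or> j=2 \<and> z=TP i 3 \<or> j=3 \<and> z = TP i 2))"
  by (auto simp: Eex_def)

lemma ls_facts:
  assumes "ls = 2 # replicate (m - 1) 4" "m \<ge> 1"
  shows "length ls = m" "ls ! 0 = 2" "\<And>i. 1 \<le> i \<Longrightarrow> i < m \<Longrightarrow> ls ! i = 4"
proof -
  show "length ls = m" using assms by simp
  show "ls ! 0 = 2" using assms by simp
  fix i assume "1 \<le> i" "i < m"
  then obtain k where "i = Suc k" "k < m - 1" by (cases i) auto
  then show "ls ! i = 4" using assms by simp
qed

lemma V_char:
  assumes "ls = 2 # replicate (m - 1) 4" "m \<ge> 1"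
  shows "v \<in> theta_V ls \<longleftrightarrow> v = TU \<or> v = TW \<or> v = TP 0 1 \<or> (\<exists>i j. v = TP i j \<and> 1 \<le> i \<and> i < m \<and> 1 \<le> j \<and> j \<le> 3)"
proof
  assume "v \<in> theta_V ls"
  then consider "v = TU" | "v = TW" | i j where "v = TP i j" "i < m" "1 \<le> j" "j < ls ! i"
    unfolding theta_V_def using ls_facts[OF assms] by auto
  then show "v = TU \<or> v = TW \<or> v = TP 0 1 \<or> (\<exists>i j. v = TP i j \<and> 1 \<le> i \<and> i < m \<and> 1 \<le> j \<and> j \<le> 3)"
  proof cases
    case (3 i j)
    show ?thesis
    proof (cases "i = 0")
      case True then show ?thesis using 3 ls_facts[OF assms] by auto
    next
      case False then show ?thesis using 3 ls_facts[OF assms] by auto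
    qed
  qed auto
next
  assume "v = TU \<or> v = TW \<or> v = TP 0 1 \<or> (\<exists>i j. v = TP i j \<and> 1 \<le> i \<and> i < m \<and> 1 \<le> j \<and> j \<le> 3)"
  then show "v \<in> theta_V ls" unfolding theta_V_def using ls_facts[OF assms] assms(2) by auto
qed

definition inV :: "nat \<Rightarrow> tvert \<Rightarrow> bool" where
 "inV m v = (v = TU \<or> v = TW \<or> v = TP 0 1 \<or> (\<exists>i j. v = TP i j \<and> 1 \<le> i \<and> i < m \<and> 1 \<le> j \<and> j \<le> 3))"

fun blk :: "tvert \<Rightarrow> nat" where
  "blk TU = 0" | "blk TW = 0"
| "blk (TP i j) = (if i = 0 then 0 else if j = 1 then (if i = 1 then 2 else 0)
     else if j = 3 then (if i = 1 then 2 else 1) else (if i = 2 then 0 else if i = 3 then 1 else 2))"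

fun pos :: "nat \<Rightarrow> tvert \<Rightarrow> nat" where
  "pos m TU = 0" | "pos m TW = 1"
| "pos m (TP i j) = (if i = 0 then 2 else if j = 1 then (if i = 1 then 0 else i+2)
     else if j = 3 then (if i = 1 then 1 else if i = 2 then 0 else i - 2)
     else (if i = 2 then 3 else if i = 1 \<or> i = 3 then m - 2 else i - 2))"

fun NB :: "nat \<Rightarrow> tvert \<Rightarrow> tvert set" where
  "NB m TU = {}" | "NB m TW = {}"
| "NB m (TP i j) = (if i = 0 then {} else if j = 1 then (if i = 1 then {TU, TP 0 1} \<union> (\<lambda>k. TP k 1) ` {2..<m} else {})
     else if j = 3 then (if i = 1 then {TW, TP 0 1} \<union> (\<lambda>k. TP k 3) ` {2..<m}
        else if i = 2 then {TW, TP 0 1, TP 2 1, TP 2 2} else {TW, TP 0 1, TP i 1})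
     else (if i = 2 then {} else if i = 3 then {TU, TW, TP 3 1} else if i = 1 then {TU, TW}
        else {TU, TW, TP i 1, TP i 3}))"

lemma pos_le: "m \<ge> 5 \<Longrightarrow> inV m v \<Longrightarrow> pos m v \<le> m + 1"
  unfolding inV_def by auto

lemma blk_le: "blk v \<le> 2"
  by (cases v) auto

lemma tp_pos:
  assumes "ls = 2 # replicate (m - 1) 4" "m \<ge> 1" "1 \<le> i" "i < m"
  shows "theta_pos ls i j = (if j = 0 then TU else if j = 4 then TW else TP i j)"
  using ls_facts[OF assms(1,2)] assms(3,4) unfolding theta_pos_def by simp

lemma tp_pos0:
  assumes "ls = 2 # replicate (m - 1) 4" "m \<ge> 1"
  shows "theta_pos ls 0 j = (if j = 0 then TU else if j = 2 then TW else TP 0 j)"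
  using ls_facts[OF assms(1,2)] unfolding theta_pos_def by simp

lemma E_imp:
  assumes "ls = 2 # replicate (m - 1) 4" "m \<ge> 1" "theta_E ls x y"
  shows "Eex m x y"
proof -
  note lf = ls_facts[OF assms(1,2)]
  obtain i j where ij: "i < m" "j < ls ! i"
    "(x = theta_pos ls i j \<and> y = theta_pos ls i (Suc j)) \<or> (y = theta_pos ls i j \<and> x = theta_pos ls i (Suc j))"
    using assms(3) lf unfolding theta_E_def by auto
  show ?thesis
  proof (cases "i = 0")
    case True
    then have "j = 0 \<or> j = 1" using ij lf by auto
    then show ?thesis using ij(3) True tp_pos0[OF assms(1,2)] \<open>m \<ge> 1\<close> by (auto simp: Eex_TU Eex_TW Eex_TP)
  next
    case False
    then have "j = 0 \<or> j = 1 \<or> j = 2 \<or> j = 3" using ij lf by auto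
    then show ?thesis using ij False tp_pos[OF assms(1,2), of i] by (auto simp: Eex_TU Eex_TW Eex_TP)
  qed
qed

definition dec :: "nat \<Rightarrow> nat \<Rightarrow> nat \<Rightarrow> tvert" where
 "dec m b p = (if b = 0 then (if p = 0 then TU else if p = 1 then TW else if p = 2 then TP 0 1 else if p = 3 then TP 2 2 else TP (p-2) 1)
   else if b = 1 then (if p = 0 then TP 2 3 else if p = m-2 then TP 3 2 else TP (p+2) 3)
   else (if p = 0 then TP 1 1 else if p = 1 then TP 1 3 else if p = m-2 then TP 1 2 else TP (p+2) 2))"

lemma decpos: assumes "m \<ge> 5" "inV m v" shows "dec m (blk v) (pos m v) = v"
proof -
  consider "v = TU" | "v = TW" | "v = TP 0 1" | k l where "v = TP k l" "1 \<le> k" "k < m" "l = 1 \<or> l = 2 \<or> l = 3"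
    using assms(2) unfolding inV_def by force
  then show ?thesis
  proof cases
    case (4 k l)
    consider "k = 1" | "k = 2" | "k = 3" | "k \<ge> 4" using 4 by linarith
    then show ?thesis using 4 assms(1) by cases (auto simp: dec_def)
  qed (auto simp: dec_def)
qed

lemma pos_inj: "m \<ge> 5 \<Longrightarrow> inV m x \<Longrightarrow> inV m y \<Longrightarrow> blk x = blk y \<Longrightarrow> pos m x = pos m y \<Longrightarrow> x = y"
  by (metis decpos)

lemma mem1: "TP k j \<in> (\<lambda>k. TP k 1) ` {2..<m} \<longleftrightarrow> j = 1 \<and> 2 \<le> k \<and> k < m" by auto
lemma mem3: "TP k j \<in> (\<lambda>k. TP k 3) ` {2..<m} \<longleftrightarrow> j = 3 \<and> 2 \<le> k \<and> k < m" by auto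
lemma mem1': "x \<notin> (\<lambda>k. TP k 1) ` {2..<m} \<longleftrightarrow> (\<forall>k j. x = TP k j \<longrightarrow> \<not>(j = 1 \<and> 2 \<le> k \<and> k < m))" by auto

lemma nb_TP:
  assumes "m \<ge> 5" "1 \<le> i" "i < m" "j = 1 \<or> j = 2 \<or> j = 3" "inV m y" "Eex m (TP i j) y \<or> (\<exists>z. Eex m (TP i j) z \<and> Eex m z y)" "blk y < blk (TP i j)"
  shows "y \<in> NB m (TP i j)"
proof -
  consider "y = TU" | "y = TW" | "y = TP 0 1" | k l where "y = TP k l" "1 \<le> k" "k < m" "l = 1 \<or> l = 2 \<or> l = 3"
    using assms(5) unfolding inV_def by force
  then show ?thesis
  proof cases
    case 1 then show ?thesis using assms by (auto simp: Eex_TU Eex_TW Eex_TP)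
  next
    case 2 then show ?thesis using assms by (auto simp: Eex_TU Eex_TW Eex_TP)
  next
    case 3 then show ?thesis using assms by (auto simp: Eex_TU Eex_TW Eex_TP)
  next
    case (4 k l)
    from assms(4) consider "j = 1" | "j = 2" | "j = 3" by blast
    then show ?thesis
    proof cases
      case 1 then show ?thesis using assms 4 by (auto simp: Eex_TU Eex_TW Eex_TP image_iff split: if_splits)
    next
      case 2 then show ?thesis using assms 4 by (auto simp: Eex_TU Eex_TW Eex_TP image_iff split: if_splits)
    next
      case 3 then show ?thesis using assms 4 by (auto simp: Eex_TU Eex_TW Eex_TP image_iff split: if_splits)
    qed
  qed
qed


lemma greedy:
  fixes r :: "'v \<Rightarrow> nat" and L :: "'v \<Rightarrow> nat set"
  assumes fin: "finite V" and L: "\<forall>v\<in>V. finite (L v) \<and> card (L v) = k"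
    and Fsub: "\<forall>v\<in>V. F v \<subseteq> {y\<in>V. r y < r v}" and Fcard: "\<forall>v\<in>V. card (F v) < k"
  shows "\<exists>f. \<forall>v\<in>V. f v \<in> L v \<and> f v \<notin> f ` F v"
proof -
  have ex: "\<exists>c. c \<in> L v \<and> c \<notin> f ` F v" if "v \<in> V" for v and f :: "'v \<Rightarrow> nat"
  proof -
    have "F v \<subseteq> V" using Fsub that by blast
    then have finF: "finite (F v)" using fin by (rule finite_subset)
    have c1: "card (f ` F v) \<le> card (F v)" using finF by (rule card_image_le)
    have c2: "card (F v) < k" using Fcard that by blast
    have c3: "card (L v) = k" "finite (L v)" using L that by blast+
    have "\<not> L v \<subseteq> f ` F v"
    proof
      assume "L v \<subseteq> f ` F v"
      then have "card (L v) \<le> card (f ` F v)" using finF by (intro card_mono) auto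
      then show False using c1 c2 c3 by linarith
    qed
    thus ?thesis by blast
  qed
  have "\<exists>f. \<forall>v\<in>V. r v < n \<longrightarrow> f v \<in> L v \<and> f v \<notin> f ` F v" for n
  proof (induction n)
    case 0 show ?case by simp
  next
    case (Suc n)
    then obtain f where f: "\<forall>v\<in>V. r v < n \<longrightarrow> f v \<in> L v \<and> f v \<notin> f ` F v" by blast
    define g where "g = (\<lambda>v. if r v = n then (SOME c. c \<in> L v \<and> c \<notin> f ` F v) else f v)"
    have img: "g ` F v = f ` F v" if "v \<in> V" "r v \<le> n" for v
    proof -
      have gf: "g y = f y" if "y \<in> F v" for y
      proof -
        have "r y < r v" using Fsub \<open>v \<in> V\<close> that by blast
        then have "r y \<noteq> n" using \<open>r v \<le> n\<close> by simp
        then show ?thesis unfolding g_def by simp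
      qed
      show ?thesis using gf by (intro image_cong refl) blast
    qed
    show ?case
    proof (intro exI ballI impI)
      fix v assume v: "v \<in> V" "r v < Suc n"
      show "g v \<in> L v \<and> g v \<notin> g ` F v"
      proof (cases "r v = n")
        case True
        then have gv: "g v = (SOME c. c \<in> L v \<and> c \<notin> f ` F v)" unfolding g_def by simp
        have "g v \<in> L v \<and> g v \<notin> f ` F v" unfolding gv by (rule someI_ex[OF ex[OF v(1), of f]])
        moreover have "g ` F v = f ` F v" using img[OF v(1)] True by simp
        ultimately show ?thesis by simp
      next
        case False
        then have gv: "g v = f v" unfolding g_def by simp
        have "r v < n" using v False by simp
        then have "f v \<in> L v \<and> f v \<notin> f ` F v" using f v(1) by blast
        moreover have "g ` F v = f ` F v" using img[OF v(1)] v(2) by simp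
        ultimately show ?thesis using gv by simp
      qed
    qed
  qed
  then obtain f where f: "\<forall>v\<in>V. r v < Suc (Max (r ` V)) \<longrightarrow> f v \<in> L v \<and> f v \<notin> f ` F v" by blast
  have "r v < Suc (Max (r ` V))" if "v \<in> V" for v
  proof -
    have "r v \<le> Max (r ` V)" using fin that by (intro Max_ge) auto
    then show ?thesis by simp
  qed
  then show ?thesis using f by blast
qed

lemma nb: assumes "m \<ge> 5" "inV m v" "inV m y" "Eex m v y \<or> (\<exists>z. Eex m v z \<and> Eex m z y)" "blk y < blk v"
  shows "y \<in> NB m v"
proof -
  consider "v = TU" | "v = TW" | "v = TP 0 1" | i j where "v = TP i j" "1 \<le> i" "i < m" "j = 1 \<or> j = 2 \<or> j = 3"
    using assms(2) unfolding inV_def by force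
  then show ?thesis
  proof cases
    case (4 i j) then show ?thesis using nb_TP[OF assms(1) 4(2,3,4) assms(3)] assms(4,5) by simp
  qed (use assms(5) in auto)
qed


lemma cl: "card (set xs) \<le> length xs" by (rule card_length)

lemma nbcard: assumes "m \<ge> 5" "inV m v" shows "finite (NB m v) \<and> card (NB m v) + pos m v \<le> m + 1"
proof -
  consider "v = TU" | "v = TW" | "v = TP 0 1" | i j where "v = TP i j" "1 \<le> i" "i < m" "j = 1 \<or> j = 2 \<or> j = 3"
    using assms(2) unfolding inV_def by force
  then show ?thesis
  proof cases
    case (4 i j)
    have c1: "card ((\<lambda>k. TP k 1) ` {2..<m}) \<le> m - 2" using card_image_le[of "{2..<m}" "\<lambda>k. TP k 1"] by simp
    have c3: "card ((\<lambda>k. TP k 3) ` {2..<m}) \<le> m - 2" using card_image_le[of "{2..<m}" "\<lambda>k. TP k 3"] by simp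
    have u1: "card ({TU, TP 0 1} \<union> (\<lambda>k. TP k 1) ` {2..<m}) \<le> 2 + (m - 2)"
      using card_Un_le[of "{TU, TP 0 1}" "(\<lambda>k. TP k 1) ` {2..<m}"] c1 card_insert_le[of "{TP 0 1}" TU] by simp
    have u3: "card ({TW, TP 0 1} \<union> (\<lambda>k. TP k 3) ` {2..<m}) \<le> 2 + (m - 2)"
      using card_Un_le[of "{TW, TP 0 1}" "(\<lambda>k. TP k 3) ` {2..<m}"] c3 card_insert_le[of "{TP 0 1}" TW] by simp
    have k3: "card {a, b, c} \<le> 3" for a b c :: tvert using cl[of "[a,b,c]"] by simp
    have k4: "card {a, b, c, d} \<le> 4" for a b c d :: tvert using cl[of "[a,b,c,d]"] by simp
    have k2: "card {a, b} \<le> 2" for a b :: tvert using cl[of "[a,b]"] by simp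
    consider "i = 1" | "i = 2" | "i = 3" | "i \<ge> 4" using 4 by linarith
    then show ?thesis
    proof cases
      case 1 then show ?thesis using 4 u1 u3 k2 assms(1) by auto
    next
      case 2 then show ?thesis using 4 k3 k4 assms(1) by auto
    next
      case 3 then show ?thesis using 4 k3 assms(1) by auto
    next
      case 5: 4 then show ?thesis using 4 k3 k4 assms(1) by auto
    qed
  qed (use assms(1) in auto)
qed

lemma divlem: "p < (n::nat) \<Longrightarrow> (b * n + p) div n = b"
  by simp


theorem lemma3p7:
  fixes m :: nat and ls :: "nat list"
  assumes "m \<ge> 5"
    and "ls = 2 # replicate (m - 1) 4"
  shows "equitably_choosable (theta_V ls) (graph_square (theta_V ls) (theta_E ls)) (m + 2)"
proof -
  have m1: "m \<ge> 1" using assms by simp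
  define V where "V = theta_V ls"
  define G where "G = graph_square V (theta_E ls)"
  have Vc: "v \<in> V \<longleftrightarrow> inV m v" for v using V_char[OF assms(2) m1] unfolding V_def inV_def by simp
  have Esym: "theta_E ls x y = theta_E ls y x" for x y unfolding theta_E_def by blast
  have Gsym: "G x y \<Longrightarrow> G y x" for x y unfolding G_def graph_square_def using Esym by blast
  have Gnb: "v \<in> V \<and> y \<in> V \<and> v \<noteq> y \<and> (Eex m v y \<or> (\<exists>z. Eex m v z \<and> Eex m z y))" if "G v y" for v y
    using that unfolding G_def graph_square_def using E_imp[OF assms(2) m1] by blast
  define IM where "IM = (\<lambda>p. TP (fst p) (snd p)) ` ({1..<m} \<times> {1..(3::nat)})"
  have mem: "x \<in> IM \<longleftrightarrow> (\<exists>i j. x = TP i j \<and> 1 \<le> i \<and> i < m \<and> 1 \<le> j \<and> j \<le> 3)" for x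
  proof
    assume "x \<in> IM"
    then obtain p where p: "p \<in> {1..<m} \<times> {1..(3::nat)}" "x = TP (fst p) (snd p)" unfolding IM_def by blast
    then show "\<exists>i j. x = TP i j \<and> 1 \<le> i \<and> i < m \<and> 1 \<le> j \<and> j \<le> 3" by (cases p) auto
  next
    assume "\<exists>i j. x = TP i j \<and> 1 \<le> i \<and> i < m \<and> 1 \<le> j \<and> j \<le> 3"
    then obtain i j where h: "x = TP i j" "1 \<le> i" "i < m" "1 \<le> j" "j \<le> 3" by blast
    have "(i, j) \<in> {1..<m} \<times> {1..(3::nat)}" using h by simp
    then show "x \<in> IM" unfolding IM_def by (rule image_eqI[rotated]) (simp add: h(1))
  qed
  have Veq: "V = {TU, TW, TP 0 1} \<union> IM"
  proof (rule set_eqI)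
    fix v show "v \<in> V \<longleftrightarrow> v \<in> {TU, TW, TP 0 1} \<union> IM"
      unfolding Vc inV_def Un_iff mem insert_iff empty_iff by blast
  qed
  have cIM: "card IM = (m - 1) * 3"
  proof -
    have inj: "inj_on (\<lambda>p. TP (fst p) (snd p)) ({1..<m} \<times> {1..(3::nat)})" by (auto simp: inj_on_def)
    have "card IM = card ({1..<m} \<times> {1..(3::nat)})" unfolding IM_def by (rule card_image[OF inj])
    also have "\<dots> = (m - 1) * 3" by (simp add: card_cartesian_product)
    finally show ?thesis .
  qed
  have disj: "{TU, TW, TP 0 1} \<inter> IM = {}" by (auto simp: mem)
  have finIM: "finite IM" unfolding IM_def by simp
  have "card V = card {TU, TW, TP 0 1} + card IM"
    unfolding Veq by (rule card_Un_disjoint) (simp, rule finIM, rule disj)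
  then have "card V = 3 + (m - 1) * 3" using cIM by simp
  then have cardV: "card V = 3 * m" using m1 by (simp add: algebra_simps)
  then have finV: "finite V" using m1 by (intro card_ge_0_finite) simp
  define r where "r v = blk v * (2*m) + pos m v" for v
  have posl: "pos m v < 2*m" if "v \<in> V" for v using pos_le[OF assms(1)] Vc that assms(1) by fastforce
  have rblk: "r v div (2*m) = blk v" if "v \<in> V" for v unfolding r_def using posl[OF that] by simp
  have rinj: "x = y" if "x \<in> V" "y \<in> V" "r x = r y" for x y
  proof -
    have "blk x = blk y" using rblk that by metis
    then have "pos m x = pos m y" using that unfolding r_def by simp
    then show ?thesis using pos_inj[OF assms(1)] Vc that \<open>blk x = blk y\<close> by blast
  qed
  have rlt: "blk y < blk x \<or> (blk y = blk x \<and> pos m y < pos m x)" if "x \<in> V" "y \<in> V" "r y < r x" for x y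
  proof -
    have "blk y \<le> blk x"
    proof (rule ccontr)
      assume "\<not> blk y \<le> blk x"
      then have "Suc (blk x) * (2*m) \<le> blk y * (2*m)" by (intro mult_le_mono1) simp
      then have "r x < r y" unfolding r_def using posl[OF that(1)] by simp
      then show False using that by simp
    qed
    then show ?thesis using that unfolding r_def by auto
  qed
  define F where "F v = {y \<in> V. r y < r v \<and> (blk y = blk v \<or> G v y)}" for v
  have Fsub: "\<forall>v\<in>V. F v \<subseteq> {y\<in>V. r y < r v}" unfolding F_def by blast
  have Fcard: "\<forall>v\<in>V. card (F v) < m + 2"
  proof
    fix v assume v: "v \<in> V"
    define S1 where "S1 = {y \<in> V. blk y = blk v \<and> pos m y < pos m v}"
    have "F v \<subseteq> S1 \<union> NB m v"
    proof
      fix y assume y: "y \<in> F v"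
      then have yV: "y \<in> V" and ry: "r y < r v" and alt: "blk y = blk v \<or> G v y" unfolding F_def by auto
      show "y \<in> S1 \<union> NB m v"
      proof (cases "blk y = blk v")
        case True then show ?thesis using rlt[OF v yV ry] yV unfolding S1_def by auto
      next
        case False
        then have "blk y < blk v" "G v y" using rlt[OF v yV ry] alt by auto
        then show ?thesis using nb[OF assms(1), of v y] Gnb[of v y] Vc by blast
      qed
    qed
    moreover have finS1: "finite S1" using finV unfolding S1_def by simp
    moreover have "card S1 \<le> pos m v"
    proof -
      have "inj_on (pos m) S1" unfolding S1_def inj_on_def using pos_inj[OF assms(1)] Vc by auto
      then have "card S1 = card (pos m ` S1)" by (simp add: card_image)
      also have "\<dots> \<le> card {..<pos m v}" by (intro card_mono) (auto simp: S1_def)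
      finally show ?thesis by simp
    qed
    moreover have "finite (NB m v)" "card (NB m v) + pos m v \<le> m + 1" using nbcard[OF assms(1)] Vc v by auto
    ultimately have "card (F v) \<le> card S1 + card (NB m v)"
      by (meson card_Un_le card_mono finite_UnI order_trans)
    then show "card (F v) < m + 2" using \<open>card S1 \<le> pos m v\<close> \<open>card (NB m v) + pos m v \<le> m + 1\<close> by simp
  qed
  have ceil: "3 \<le> nat \<lceil>real (card V) / real (m + 2)\<rceil>"
  proof -
    have "2 * real (m + 2) < real (3 * m)" using assms(1) by simp
    then have "2 < real (card V) / real (m + 2)" unfolding cardV by (simp add: field_simps)
    then have "3 \<le> \<lceil>real (card V) / real (m + 2)\<rceil>" by (simp add: le_ceiling_iff)
    then show ?thesis by linarith
  qed
  show ?thesis unfolding equitably_choosable_def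
  proof (intro allI impI)
    fix L assume L: "k_assignment (theta_V ls) (m + 2) L"
    have L': "\<forall>v\<in>V. finite (L v) \<and> card (L v) = m + 2" using L unfolding k_assignment_def V_def by blast
    obtain f where f: "\<forall>v\<in>V. f v \<in> L v \<and> f v \<notin> f ` F v"
      using greedy[OF finV L' Fsub Fcard] by blast
    have diff: "f x \<noteq> f y" if "x \<in> V" "y \<in> V" "x \<noteq> y" "blk x = blk y \<or> G x y" for x y
    proof -
      have "r x \<noteq> r y" using rinj that by blast
      then consider "r y < r x" | "r x < r y" by linarith
      then show ?thesis
      proof cases
        case 1 then have yF: "y \<in> F x" using that unfolding F_def by auto
        show ?thesis
        proof
          assume "f x = f y"
          then have "f x \<in> f ` F x" using yF by (metis image_eqI)
          then show False using f that(1) by blast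
        qed
      next
        case 2 then have xF: "x \<in> F y" using that Gsym unfolding F_def by auto
        show ?thesis
        proof
          assume "f x = f y"
          then have "f y \<in> f ` F y" using xF by (metis image_eqI)
          then show False using f that(2) by blast
        qed
      qed
    qed
    have "equitable_L_coloring V G (m + 2) L f"
      unfolding equitable_L_coloring_def
    proof (intro conjI ballI allI impI)
      fix v assume "v \<in> V" then show "f v \<in> L v" using f by blast
    next
      fix x y assume "x \<in> V" "y \<in> V" "G x y"
      then show "f x \<noteq> f y" using diff Gnb by blast
    next
      fix c
      define S where "S = {v \<in> V. f v = c}"
      have "inj_on blk S" unfolding inj_on_def S_def using diff by blast
      then have "card S = card (blk ` S)" by (simp add: card_image)
      also have "\<dots> \<le> card {..(2::nat)}" by (intro card_mono) (auto simp: blk_le)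
      finally have "card S \<le> 3" by simp
      then show "card {v \<in> V. f v = c} \<le> nat \<lceil>real (card V) / real (m + 2)\<rceil>" using ceil unfolding S_def by linarith
    qed
    then show "\<exists>f. equitable_L_coloring (theta_V ls) (graph_square (theta_V ls) (theta_E ls)) (m + 2) L f"
      unfolding V_def G_def by blast
  qed
qed


end
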